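(* Let $M$ be a Maya diagram with partition $\lambda\neq\emptyset$, and let $D$ be the set of critical degrees of $M$. Then: (i) if $q_1,q_2\in D$ then $q_1+q_2\in D$; (ii) with $q_c=\lambda_1+\ell$, where $\ell$ is the length of $\lambda$, every integer $q\ge q_c$ belongs to $D$, while $q_c-1\notin D$. Moreover $D$ depends only on $\lambda$ (i.e. $M$ and $M+n$ have the same critical degrees for all $n\in\mathbb{Z}$).
   Context: A Maya diagram is a set $M\subset\mathbb{Z}$ such that $K_M^+=\{m\in M: m\ge 0\}$ and $K_M^-=\{m\in\mathbb{Z}\setminus M: m<0\}$ are finite; its index is $\sigma_M=\#K_M^+-\#K_M^-$, and $M+n=\{m+n:m\in M\}$. For a partition $\lambda$ (non-increasing non-negative integer sequence, eventually $0$; length $\ell$ = number of nonzero parts) let $M^{(\lambda)}=\{\lambda_i-i:i\ge1\}$; every Maya diagram equals $M^{(\lambda)}+\sigma_M$ for a unique partition $\lambda$, called the partition of $M$. A positive integer $q$ is a critical degree of $M$ ($M$ is a $q$-core) if $M\subset M+q$. *)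

theory Defs
  imports Main
begin

definition maya :: "int set \<Rightarrow> bool" where
  "maya M \<longleftrightarrow> finite {m \<in> M. m \<ge> 0} \<and> finite {m. m < 0 \<and> m \<notin> M}"

definition maya_index :: "int set \<Rightarrow> int" where
  "maya_index M = int (card {m \<in> M. m \<ge> 0}) - int (card {m. m < 0 \<and> m \<notin> M})"

definition shift :: "int set \<Rightarrow> int \<Rightarrow> int set" where
  "shift M n = (\<lambda>m. m + n) ` M"

(* A partition lambda_1 >= lambda_2 >= ... is encoded 0-based: lam i = lambda_(i+1). *)
definition is_partition :: "(nat \<Rightarrow> nat) \<Rightarrow> bool" where
  "is_partition lam \<longleftrightarrow> (\<forall>i. lam (Suc i) \<le> lam i) \<and> finite {i. lam i \<noteq> 0}"

definition part_length :: "(nat \<Rightarrow> nat) \<Rightarrow> nat" where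
  "part_length lam = card {i. lam i \<noteq> 0}"

definition maya_of_partition :: "(nat \<Rightarrow> nat) \<Rightarrow> int set" where
  "maya_of_partition lam = {int (lam i) - int (Suc i) | i. True}"

definition partition_of :: "int set \<Rightarrow> (nat \<Rightarrow> nat) \<Rightarrow> bool" where
  "partition_of M lam \<longleftrightarrow> is_partition lam \<and> M = shift (maya_of_partition lam) (maya_index M)"

definition critical_degree :: "int set \<Rightarrow> nat \<Rightarrow> bool" where
  "critical_degree M q \<longleftrightarrow> q > 0 \<and> M \<subseteq> shift M (int q)"

end

theory Submission
  imports Defs
begin

lemma shift_shift: "shift (shift M a) b = shift M (a + b)"
  unfolding shift_def by (auto simp: image_image add.assoc)

lemma shift_sub_iff: "shift A n \<subseteq> shift B n \<longleftrightarrow> A \<subseteq> B"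
  unfolding shift_def by auto

lemma crit_shift: "critical_degree (shift M n) q \<longleftrightarrow> critical_degree M q"
proof -
  have "shift (shift M n) (int q) = shift (shift M (int q)) n"
    by (simp add: shift_shift add.commute)
  thus ?thesis unfolding critical_degree_def using shift_sub_iff by metis
qed

lemma antimono_lam: assumes "\<forall>i. lam (Suc i) \<le> (lam::nat\<Rightarrow>nat) i" shows "i \<le> j \<Longrightarrow> lam j \<le> lam i"
proof (induction j)
  case 0 thus ?case by simp
next
  case (Suc j)
  show ?case
  proof (cases "i = Suc j")
    case False
    hence "i \<le> j" using Suc.prems by simp
    thus ?thesis using Suc.IH assms le_trans by blast
  qed simp
qed

lemma supp_eq:
  assumes "is_partition lam"
  shows "{i. lam i \<noteq> 0} = {..<part_length lam}"
proof -
  let ?S = "{i. lam i \<noteq> 0}"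
  have fin: "finite ?S" and mono: "\<forall>i. lam (Suc i) \<le> lam i" using assms unfolding is_partition_def by auto
  have down: "j \<in> ?S" if "i \<in> ?S" "j \<le> i" for i j
    using antimono_lam[OF mono that(2)] that(1) by auto
  obtain k where k: "k \<notin> ?S" using fin infinite_UNIV_nat by (metis UNIV_I finite_subset subsetI)
  define n where "n = (LEAST k. k \<notin> ?S)"
  have nS: "n \<notin> ?S" unfolding n_def by (rule LeastI[of _ k]) (rule k)
  have eq: "?S = {..<n}"
  proof
    show "?S \<subseteq> {..<n}"
    proof
      fix j assume "j \<in> ?S"
      hence "\<not> n \<le> j" using down nS by blast
      thus "j \<in> {..<n}" by simp
    qed
    show "{..<n} \<subseteq> ?S" using not_less_Least n_def by fastforce
  qed
  thus ?thesis unfolding part_length_def by simp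
qed

theorem mainTheorem5:
  fixes M :: "int set" and lam :: "nat \<Rightarrow> nat"
  assumes "maya M"
    and "partition_of M lam"
    and "lam 0 \<noteq> 0"
  shows "(\<forall>q1 q2. critical_degree M q1 \<longrightarrow> critical_degree M q2 \<longrightarrow> critical_degree M (q1 + q2))
    \<and> (\<forall>q. q \<ge> lam 0 + part_length lam \<longrightarrow> critical_degree M q)
    \<and> \<not> critical_degree M (lam 0 + part_length lam - 1)
    \<and> (\<forall>n q. critical_degree (shift M n) q \<longleftrightarrow> critical_degree M q)"
proof -
  define N where "N = maya_of_partition lam"
  define l where "l = part_length lam"
  have P: "is_partition lam" and MN: "M = shift N (maya_index M)"
    using assms(2) unfolding partition_of_def N_def by auto
  have mono: "\<forall>i. lam (Suc i) \<le> lam i" using P unfolding is_partition_def by auto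
  have supp: "\<And>i. lam i \<noteq> 0 \<longleftrightarrow> i < l" using supp_eq[OF P] unfolding l_def by blast
  have critM: "critical_degree M q \<longleftrightarrow> critical_degree N q" for q
    using MN crit_shift by metis
  have memN: "m \<in> N \<longleftrightarrow> (\<exists>i. m = int (lam i) - int (Suc i))" for m
    unfolding N_def maya_of_partition_def by auto
  have top: "m \<le> int (lam 0) - 1" if "m \<in> N" for m
  proof -
    obtain i where "m = int (lam i) - int (Suc i)" using memN[of m] \<open>m \<in> N\<close> by blast
    moreover have "lam i \<le> lam 0" using antimono_lam[OF mono] by simp
    ultimately show ?thesis by simp
  qed
  have low: "m \<in> N" if "m \<le> - int l - 1" for m
  proof -
    define i where "i = nat (- m - 1)"
    have "i \<ge> l" using that unfolding i_def by simp
    hence "lam i = 0" using supp by (meson not_less)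
    moreover have "m = - int (Suc i)" using that unfolding i_def by simp
    ultimately show ?thesis using memN[of m] by (intro iffD2[OF memN[of m]] exI[of _ i]) simp
  qed
  have notin: "- int l \<notin> N"
  proof
    assume "- int l \<in> N"
    then obtain i where i: "- int l = int (lam i) - int (Suc i)" using memN by auto
    show False
    proof (cases "i < l")
      case True
      hence "lam i \<ge> 1" using supp by (meson less_one not_less)
      thus False using i True by simp
    next
      case False hence "lam i = 0" using supp by blast
      thus False using i False by simp
    qed
  qed
  have top_in: "int (lam 0) - 1 \<in> N" by (intro iffD2[OF memN] exI[of _ 0]) simp
  have shift_mem: "x \<in> shift N (int q) \<longleftrightarrow> x - int q \<in> N" for x q
    unfolding shift_def by (auto intro: image_eqI[where x="x - int q"])
  have p1: "critical_degree M (q1 + q2)" if "critical_degree M q1" "critical_degree M q2" for q1 q2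
  proof -
    have "M \<subseteq> shift M (int q1)" "M \<subseteq> shift M (int q2)" "q1 > 0"
      using that unfolding critical_degree_def by auto
    hence "M \<subseteq> shift (shift M (int q2)) (int q1)" using shift_sub_iff by blast
    thus ?thesis using \<open>q1 > 0\<close> unfolding critical_degree_def by (simp add: shift_shift add.commute)
  qed
  have p2: "critical_degree M q" if "q \<ge> lam 0 + l" for q
  proof -
    have "N \<subseteq> shift N (int q)"
    proof
      fix x assume "x \<in> N"
      hence "x \<le> int (lam 0) - 1" by (rule top)
      hence "x - int q \<le> - int l - 1" using that by simp
      thus "x \<in> shift N (int q)" using low shift_mem by blast
    qed
    moreover have "q > 0" using that assms(3) by simp
    ultimately show ?thesis using critM unfolding critical_degree_def by blast
  qed
  have p3: "\<not> critical_degree M (lam 0 + l - 1)"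
  proof
    assume "critical_degree M (lam 0 + l - 1)"
    hence "N \<subseteq> shift N (int (lam 0 + l - 1))" using critM unfolding critical_degree_def by blast
    hence "int (lam 0) - 1 - int (lam 0 + l - 1) \<in> N" using top_in shift_mem by blast
    moreover have "int (lam 0) - 1 - int (lam 0 + l - 1) = - int l" using assms(3) by simp
    ultimately show False using notin by simp
  qed
  show ?thesis using p1 p2 p3 crit_shift unfolding l_def by blast
qed

end
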